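(* Let $M\ge1$, let $a>\log M+3$, and let $X\sim\mathcal{N}(\mu^*,1)$ on $\mathbb{R}$ with $\mu^*\ge a$. Let $\mu_1,\dots,\mu_M\in\mathbb{R}$ be current centers and let $i\in[M]$ with $\mu_i\ge0$. Then $$\mathbb{E}[w_i(X)X]\ge0.$$ If moreover $\mu^*\le3a$ and $0\le\mu_i\le4a$, then $$\mathbb{E}[w_i(X)X]\ge\frac{a}{5M}e^{-9a^2/2}.$$
   Context: For current centers $\mu_1,\dots,\mu_M\in\mathbb{R}$, the membership weights are $$w_i(x)=\frac{e^{-(x-\mu_i)^2/2}}{\sum_{j=1}^M e^{-(x-\mu_j)^2/2}}.$$ *)

theory Defs
  imports "HOL-Probability.Probability"
begin

text \<open>Membership weight of center i (0-based indices 0..M-1) at point x.\<close>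
definition weight :: "nat \<Rightarrow> (nat \<Rightarrow> real) \<Rightarrow> nat \<Rightarrow> real \<Rightarrow> real" where
  "weight M mu i x = exp (- (x - mu i)\<^sup>2 / 2) / (\<Sum>j<M. exp (- (x - mu j)\<^sup>2 / 2))"

end

theory Submission
  imports Defs
begin

lemma weight_meas[measurable]: "weight M mu i \<in> borel_measurable borel"
  unfolding weight_def[abs_def] by measurable

lemma denom_ge:
  fixes mu :: "nat \<Rightarrow> real"
  assumes "i < M"
  shows "exp (- (x - mu i)\<^sup>2 / 2) \<le> (\<Sum>j<M. exp (- (x - mu j)\<^sup>2 / 2))"
  using assms by (intro member_le_sum) auto

lemma denom_le:
  fixes mu :: "nat \<Rightarrow> real"
  shows "(\<Sum>j<M. exp (- (x - mu j)\<^sup>2 / 2)) \<le> real M"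
proof -
  have "(\<Sum>j<M. exp (- (x - mu j)\<^sup>2 / 2)) \<le> (\<Sum>j<M. (1::real))"
    by (intro sum_mono) auto
  then show ?thesis by simp
qed

lemma denom_pos:
  fixes mu :: "nat \<Rightarrow> real"
  assumes "i < M"
  shows "0 < (\<Sum>j<M. exp (- (x - mu j)\<^sup>2 / 2))"
  using denom_ge[OF assms, of x mu] by (meson exp_gt_zero less_le_trans)

lemma weight_pos: "i < M \<Longrightarrow> 0 < weight M mu i x"
  unfolding weight_def using denom_pos[of i M x mu] by simp

lemma weight_le1: "i < M \<Longrightarrow> weight M mu i x \<le> 1"
  unfolding weight_def using denom_ge[of i M x mu] denom_pos[of i M x mu]
  by (simp add: divide_le_eq_1)

lemma weight_lower: "i < M \<Longrightarrow> exp (- (x - mu i)\<^sup>2 / 2) / real M \<le> weight M mu i x"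
  unfolding weight_def using denom_pos[of i M x mu] denom_le[of x mu M]
  by (intro divide_left_mono) auto

lemma ratio_term:
  fixes mu :: "nat \<Rightarrow> real"
  assumes "x < y" "y \<le> 2" "mu i \<ge> 0"
  shows "exp (- (y - mu j)\<^sup>2 / 2) / exp (- (y - mu i)\<^sup>2 / 2)
       \<le> exp (- (x - mu j)\<^sup>2 / 2) / exp (- (x - mu i)\<^sup>2 / 2) + exp 2"
proof -
  define d where "d = mu j - mu i"
  have eq: "\<And>z. exp (- (z - mu j)\<^sup>2 / 2) / exp (- (z - mu i)\<^sup>2 / 2)
      = exp (d * (z - mu i) - d\<^sup>2 / 2)"
  proof -
    fix z :: real
    have "- (z - mu j)\<^sup>2 / 2 - - (z - mu i)\<^sup>2 / 2 = d * (z - mu i) - d\<^sup>2 / 2"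
      by (simp add: d_def power2_eq_square field_simps)
    then show "exp (- (z - mu j)\<^sup>2 / 2) / exp (- (z - mu i)\<^sup>2 / 2)
      = exp (d * (z - mu i) - d\<^sup>2 / 2)" by (simp add: exp_diff[symmetric])
  qed
  show ?thesis
  proof (cases "d \<le> 0")
    case True
    then have "d * (y - mu i) - d\<^sup>2 / 2 \<le> d * (x - mu i) - d\<^sup>2 / 2"
      using assms by (simp add: mult_left_mono_neg)
    then have "exp (d * (y - mu i) - d\<^sup>2 / 2) \<le> exp (d * (x - mu i) - d\<^sup>2 / 2)" by simp
    then show ?thesis unfolding eq by (smt (verit) exp_gt_zero)
  next
    case False
    have "d * (y - mu i) - d\<^sup>2 / 2 \<le> 2"
    proof (cases "y - mu i \<le> 0")
      case True
      then have "d * (y - mu i) \<le> 0" using False by (simp add: mult_nonneg_nonpos)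
      moreover have "0 \<le> d\<^sup>2 / 2" by simp
      ultimately show ?thesis by linarith
    next
      case F2: False
      have "0 \<le> (d - (y - mu i))\<^sup>2" by simp
      then have "d * (y - mu i) - d\<^sup>2 / 2 \<le> (y - mu i)\<^sup>2 / 2"
        by (simp add: power2_eq_square algebra_simps)
      moreover have "(y - mu i)\<^sup>2 \<le> 2\<^sup>2" using F2 assms
        by (intro power_mono) auto
      ultimately show ?thesis by simp
    qed
    then have "exp (d * (y - mu i) - d\<^sup>2 / 2) \<le> exp 2" by simp
    then show ?thesis unfolding eq by (smt (verit) exp_gt_zero)
  qed
qed

lemma recip_aux:
  fixes a b c :: real
  assumes "0 < a" "0 < b" "b \<le> c * a"
  shows "1 / a \<le> c / b"
  using assms by (simp add: field_simps)

lemma weight_compare: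
  fixes mu :: "nat \<Rightarrow> real"
  assumes "i < M" "x < y" "y \<le> 2" "mu i \<ge> 0"
  shows "weight M mu i x \<le> (1 + real M * exp 2) * weight M mu i y"
proof -
  define e where "e = (\<lambda>j z. exp (- (z - mu j)\<^sup>2 / 2))"
  define D where "D = (\<lambda>z. \<Sum>j<M. e j z)"
  have Dpos: "\<And>z. 0 < D z" unfolding D_def e_def using denom_pos[OF assms(1)] by blast
  have Dge: "\<And>z. e i z \<le> D z" unfolding D_def e_def using denom_ge[OF assms(1)] by blast
  have epos: "\<And>j z. 0 < e j z" unfolding e_def by simp
  have w: "\<And>z. weight M mu i z = 1 / (D z / e i z)"
    unfolding weight_def D_def e_def by simp
  have Rx1: "1 \<le> D x / e i x" using Dge[of x] epos[of i x] by simp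
  have "D y / e i y = (\<Sum>j<M. e j y / e i y)" unfolding D_def by (simp add: sum_divide_distrib)
  also have "\<dots> \<le> (\<Sum>j<M. e j x / e i x + exp 2)"
    using ratio_term[where mu=mu and i=i, OF assms(2) assms(3) assms(4)] by (intro sum_mono) (simp add: e_def)
  also have "\<dots> = D x / e i x + real M * exp 2"
    unfolding D_def by (simp add: sum.distrib sum_divide_distrib)
  also have "\<dots> \<le> (1 + real M * exp 2) * (D x / e i x)"
  proof -
    have "real M * exp 2 * 1 \<le> real M * exp 2 * (D x / e i x)"
      using Rx1 by (intro mult_left_mono) auto
    then show ?thesis by (simp add: algebra_simps)
  qed
  finally have Ry: "D y / e i y \<le> (1 + real M * exp 2) * (D x / e i x)" .
  have Rypos: "0 < D y / e i y" using Dpos epos by simp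
  have "1 / (D x / e i x) \<le> (1 + real M * exp 2) / (D y / e i y)"
    using Ry Rypos Rx1 by (intro recip_aux) auto
  then show ?thesis unfolding w by simp
qed

lemma neg_tail:
  fixes x mus :: real
  assumes "x < 0" "mus \<ge> 3"
  shows "(- x) * normal_density mus 1 x \<le> exp (- mus\<^sup>2 / 2) / 4 * std_normal_density x"
proof -
  define t where "t = - x"
  have t: "t > 0" using assms t_def by simp
  have "(1 + 3 * t / 2)\<^sup>2 \<le> (exp (3 * t / 2))\<^sup>2"
    using t by (intro power_mono) (auto simp del: exp_ge_add_one_self intro: exp_ge_add_one_self[THEN order_trans[rotated]])
  also have "\<dots> = exp (3 * t)" by (simp add: exp_double[symmetric] power2_eq_square exp_add[symmetric])
  finally have e3': "(1 + 3 * t / 2)\<^sup>2 \<le> exp (3 * t)" .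
  have "0 \<le> (3*t/2 - 1/3)\<^sup>2" by simp
  then have "4 * t \<le> (1 + 3 * t / 2)\<^sup>2" by (simp add: power2_eq_square field_simps)
  with e3' have e3: "4 * t \<le> exp (3 * t)" by linarith
  have "exp (mus * x) \<le> exp (3 * x)" using assms by (intro exp_mono) (simp add: mult_right_mono_neg)
  also have "exp (3 * x) = 1 / exp (3 * t)" using t_def by (simp add: exp_minus field_simps)
  finally have "t * exp (mus * x) \<le> t * (1 / exp (3 * t))" by (rule mult_left_mono) (use t in auto)
  also have "\<dots> \<le> 1 / 4" using e3 t by (simp add: field_simps)
  finally have key: "(- x) * exp (mus * x) \<le> 1 / 4" using t_def by simp
  have nd: "normal_density mus 1 x = std_normal_density x * exp (mus * x) * exp (- mus\<^sup>2 / 2)"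
    by (simp add: normal_density_def exp_add[symmetric] power2_eq_square algebra_simps diff_divide_distrib add_divide_distrib)
  have "(- x) * normal_density mus 1 x = ((- x) * exp (mus * x)) * (std_normal_density x * exp (- mus\<^sup>2 / 2))"
    unfolding nd by (simp add: algebra_simps)
  also have "\<dots> \<le> (1/4) * (std_normal_density x * exp (- mus\<^sup>2 / 2))"
    using key by (intro mult_right_mono) auto
  finally show ?thesis by (simp add: mult_ac)
qed

lemma sqrt2pi_le3: "sqrt (2 * pi) \<le> 3"
proof -
  have "2 * pi \<le> 3\<^sup>2" using pi_less_4 by simp
  then have "sqrt (2 * pi) \<le> sqrt (3\<^sup>2)" by (rule real_sqrt_le_mono)
  then show ?thesis by simp
qed

lemma num_bound:
  fixes M :: nat and a mus :: real
  assumes "M \<ge> 1" "a > ln (real M) + 3" "mus \<ge> a"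
  shows "(1 + real M * exp 2) * exp (- mus\<^sup>2 / 2) / 4 \<le> normal_density mus 1 1"
proof -
  have Mpos: "real M > 0" using assms by simp
  have "real M * exp 2 = exp (ln (real M) + 2)" using Mpos by (simp add: exp_add)
  also have "\<dots> \<le> exp (mus - 1)" using assms by simp
  finally have m1: "real M * exp 2 \<le> exp (mus - 1)" .
  have "ln (real M) \<ge> 0" using assms by simp
  then have "mus \<ge> 1" using assms by linarith
  then have "1 \<le> exp (mus - 1)" by simp
  with m1 have C: "1 + real M * exp 2 \<le> 2 * exp (mus - 1)" by linarith
  have h: "exp (1/2::real) \<ge> 3/2" using exp_ge_add_one_self[of "1/2::real"] by simp
  have ex: "exp (- (1 - mus)\<^sup>2 / 2) = exp (- mus\<^sup>2 / 2) * exp (mus - 1) * exp (1/2)"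
  proof -
    have "- (1 - mus)\<^sup>2 / 2 = - mus\<^sup>2 / 2 + (mus - 1) + 1/2"
      by (simp add: power2_eq_square field_simps)
    then show ?thesis by (simp only: exp_add)
  qed
  have nd: "normal_density mus 1 1 = exp (- (1 - mus)\<^sup>2 / 2) / sqrt (2 * pi)"
    by (simp add: normal_density_def)
  have E0: "exp (- mus\<^sup>2 / 2) * exp (mus - 1) > 0" by simp
  have "(1 + real M * exp 2) * exp (- mus\<^sup>2 / 2) / 4 \<le> 2 * exp (mus - 1) * exp (- mus\<^sup>2 / 2) / 4"
    using C by (intro divide_right_mono mult_right_mono) auto
  also have "\<dots> = (exp (- mus\<^sup>2 / 2) * exp (mus - 1)) * (3/2) / 3" by simp
  also have "\<dots> \<le> (exp (- mus\<^sup>2 / 2) * exp (mus - 1)) * exp (1/2) / 3"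
    using h E0 by (intro divide_right_mono mult_left_mono) auto
  also have "\<dots> \<le> (exp (- mus\<^sup>2 / 2) * exp (mus - 1)) * exp (1/2) / sqrt (2 * pi)"
    using sqrt2pi_le3 E0 by (intro divide_left_mono) auto
  also have "\<dots> = normal_density mus 1 1" unfolding nd ex by simp
  finally show ?thesis .
qed

lemma L_bound:
  fixes M :: nat and a mus :: real and mu :: "nat \<Rightarrow> real"
  assumes "i < M" "a > 3" "a \<le> mus" "mus \<le> 3 * a" "0 \<le> mu i" "mu i \<le> 4 * a"
    and y: "(mu i + mus) / 2 + 1 \<le> y" "y \<le> (mu i + mus) / 2 + 2"
  shows "a / (5 * real M) * exp (- 9 * a\<^sup>2 / 2) \<le> normal_density mus 1 y * weight M mu i y * y"
proof -
  define m where "m = (mu i + mus) / 2"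
  have Mpos: "real M > 0" using assms by simp
  have "a \<le> mu i + mus" using assms by linarith
  then have "a / 2 \<le> (mu i + mus) / 2" by (simp add: divide_right_mono)
  then have ya: "a / 2 \<le> y" using y(1) by linarith
  have ex: "- (y - mus)\<^sup>2 / 2 + - (y - mu i)\<^sup>2 / 2 = - (y - m)\<^sup>2 - (mus - mu i)\<^sup>2 / 4"
    unfolding m_def by (simp add: power2_eq_square field_simps)
  have "(y - m)\<^sup>2 \<le> 2\<^sup>2" using y unfolding m_def[symmetric] by (intro power_mono) auto
  moreover have "(mus - mu i)\<^sup>2 \<le> (3 * a)\<^sup>2"
  proof -
    have "\<bar>mus - mu i\<bar> \<le> \<bar>3 * a\<bar>" using assms by (simp add: abs_le_iff)
    then show ?thesis by (simp only: abs_le_square_iff)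
  qed
  ultimately have exb: "- 4 - 9 * a\<^sup>2 / 4 \<le> - (y - mus)\<^sup>2 / 2 + - (y - mu i)\<^sup>2 / 2"
    unfolding ex by (simp add: power_mult_distrib)
  have "exp (- 4 - 9 * a\<^sup>2 / 4) / 3 \<le> exp (- (y - mus)\<^sup>2 / 2 + - (y - mu i)\<^sup>2 / 2) / sqrt (2 * pi)"
    using exb sqrt2pi_le3 by (intro frac_le) auto
  also have "\<dots> = normal_density mus 1 y * exp (- (y - mu i)\<^sup>2 / 2)"
    by (simp add: normal_density_def exp_add[symmetric])
  finally have P: "exp (- 4 - 9 * a\<^sup>2 / 4) / 3 \<le> normal_density mus 1 y * exp (- (y - mu i)\<^sup>2 / 2)" .
  have "normal_density mus 1 y * (exp (- (y - mu i)\<^sup>2 / 2) / real M) \<le> normal_density mus 1 y * weight M mu i y"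
    using weight_lower[OF assms(1)] by (intro mult_left_mono) auto
  with P have Q: "exp (- 4 - 9 * a\<^sup>2 / 4) / 3 / real M \<le> normal_density mus 1 y * weight M mu i y"
    using Mpos by (smt (verit) divide_right_mono times_divide_eq_right)
  have R: "exp (- 4 - 9 * a\<^sup>2 / 4) / 3 / real M * (a/2) \<le> normal_density mus 1 y * weight M mu i y * y"
    using Q ya assms(2) weight_pos[OF assms(1), of mu y] by (intro mult_mono) auto
  have t: "exp (9 * a\<^sup>2 / 4 - 4) \<ge> 6/5"
  proof -
    have "a\<^sup>2 \<ge> 3\<^sup>2" using assms(2) by (intro power_mono) auto
    then have "9 * a\<^sup>2 / 4 - 4 \<ge> 1/5" by simp
    then show ?thesis using exp_ge_add_one_self[of "9 * a\<^sup>2 / 4 - 4"] by linarith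
  qed
  have "exp (- 4 - 9 * a\<^sup>2 / 4) = exp (- 9 * a\<^sup>2 / 2) * exp (9 * a\<^sup>2 / 4 - 4)"
    by (simp add: exp_add[symmetric] field_simps)
  then have "exp (- 9 * a\<^sup>2 / 2) * (6/5) \<le> exp (- 4 - 9 * a\<^sup>2 / 4)"
    using t by (simp add: mult_left_mono)
  then have "a / (5 * real M) * exp (- 9 * a\<^sup>2 / 2) \<le> exp (- 4 - 9 * a\<^sup>2 / 4) / 3 / real M * (a/2)"
    using Mpos assms(2) by (simp add: field_simps)
  with R show ?thesis by linarith
qed

theorem lemma5:
  fixes M :: nat and a mustar :: real and mu :: "nat \<Rightarrow> real" and i :: nat
  assumes "M \<ge> 1"
    and "a > ln (real M) + 3"
    and "mustar \<ge> a"
    and "i < M"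
    and "mu i \<ge> 0"
  shows "(\<integral>x. weight M mu i x * x \<partial>(density lborel (normal_density mustar 1))) \<ge> 0
    \<and> (mustar \<le> 3 * a \<and> mu i \<le> 4 * a \<longrightarrow>
        (\<integral>x. weight M mu i x * x \<partial>(density lborel (normal_density mustar 1)))
          \<ge> a / (5 * real M) * exp (- 9 * a\<^sup>2 / 2))"
proof -
  note iM = assms(4)
  have lnM: "ln (real M) \<ge> 0" using assms(1) by simp
  have a3: "a > 3" using assms(2) lnM by linarith
  have mu3: "mustar \<ge> 3" using a3 assms(3) by linarith
  define w where "w = weight M mu i"
  define phi where "phi = normal_density mustar 1"
  define g where "g = (\<lambda>x. phi x * (w x * x))"
  define I1 where "I1 = (indicator {..<0} :: real \<Rightarrow> real)"
  define I2 where "I2 = (indicator {1..2} :: real \<Rightarrow> real)"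
  have wm[measurable]: "w \<in> borel_measurable borel" unfolding w_def by measurable
  have phim[measurable]: "phi \<in> borel_measurable borel" unfolding phi_def by measurable
  have gm[measurable]: "g \<in> borel_measurable borel" unfolding g_def by measurable
  have w01: "\<And>x. 0 < w x \<and> w x \<le> 1" unfolding w_def using weight_pos[OF iM] weight_le1[OF iM] by blast
  have phi0: "\<And>x. 0 \<le> phi x" unfolding phi_def by simp
  have E: "(\<integral>x. weight M mu i x * x \<partial>(density lborel (normal_density mustar 1))) = integral\<^sup>L lborel g"
    using integral_density[of "\<lambda>x. weight M mu i x * x" lborel "normal_density mustar 1"]
    by (simp add: g_def w_def phi_def)
  have intg: "integrable lborel g"
  proof (rule Bochner_Integration.integrable_bound[OF integrable_normal_moment_nz_1[of 1 mustar, simplified]])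
    show "g \<in> borel_measurable lborel" by simp
    show "AE x in lborel. norm (g x) \<le> norm (normal_density mustar 1 x * x)"
    proof (intro AE_I2)
      fix x
      have "\<bar>w x\<bar> \<le> 1" using w01[of x] by simp
      then have "\<bar>phi x\<bar> * (\<bar>w x\<bar> * \<bar>x\<bar>) \<le> \<bar>phi x\<bar> * (1 * \<bar>x\<bar>)"
        by (intro mult_left_mono mult_right_mono) auto
      then show "norm (g x) \<le> norm (normal_density mustar 1 x * x)"
        unfolding g_def phi_def by (simp add: abs_mult)
    qed
  qed
  have int1: "integrable lborel (\<lambda>x. g x * I1 x)" unfolding I1_def
    by (rule integrable_real_mult_indicator) (auto simp: intg)
  have int2: "integrable lborel (\<lambda>x. g x * I2 x)" unfolding I2_def
    by (rule integrable_real_mult_indicator) (auto simp: intg)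
  define A1 where "A1 = integral\<^sup>L lborel (\<lambda>x. g x * I1 x)"
  define A2 where "A2 = integral\<^sup>L lborel (\<lambda>x. g x * I2 x)"
  define A3 where "A3 = integral\<^sup>L lborel (\<lambda>x. g x - g x * I1 x - g x * I2 x)"
  have A3eq: "A3 = integral\<^sup>L lborel g - A1 - A2"
    unfolding A3_def A1_def A2_def using intg int1 int2 by simp
  have A3int: "integrable lborel (\<lambda>x. g x - g x * I1 x - g x * I2 x)"
    using intg int1 int2 by simp
  have intpw: "integrable lborel (\<lambda>y. phi y * w y)"
  proof (rule Bochner_Integration.integrable_bound[OF integrable_normal_density[of 1 mustar, OF zero_less_one]])
    show "(\<lambda>y. phi y * w y) \<in> borel_measurable lborel" by simp
    show "AE x in lborel. norm (phi x * w x) \<le> norm (normal_density mustar 1 x)"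
    proof (intro AE_I2)
      fix x
      have "\<bar>w x\<bar> \<le> 1" using w01[of x] by simp
      then have "phi x * \<bar>w x\<bar> \<le> phi x * 1" using phi0[of x] by (intro mult_left_mono) auto
      then show "norm (phi x * w x) \<le> norm (normal_density mustar 1 x)"
        using phi0[of x] unfolding phi_def by (simp add: abs_mult)
    qed
  qed
  define K where "K = integral\<^sup>L lborel (\<lambda>y. phi y * w y * I2 y)"
  have intK: "integrable lborel (\<lambda>y. phi y * w y * I2 y)" unfolding I2_def
    by (rule integrable_real_mult_indicator) (auto simp: intpw)
  have I2_01: "\<And>y. I2 y = 0 \<or> (I2 y = 1 \<and> 1 \<le> y \<and> y \<le> 2)" unfolding I2_def by (simp add: indicator_def)
  have I1_01: "\<And>y. (I1 y = 0 \<and> 0 \<le> y) \<or> (I1 y = 1 \<and> y < 0)" unfolding I1_def by (auto simp: indicator_def)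
  have K0: "0 \<le> K" unfolding K_def
    using w01 phi0 by (intro integral_nonneg_AE AE_I2 mult_nonneg_nonneg) (auto simp: I2_def less_imp_le)
  define phi1 where "phi1 = phi 1"
  have phi1pos: "0 < phi1" unfolding phi1_def phi_def by (simp add: normal_density_pos)
  have intphiI2: "integrable lborel (\<lambda>y. phi y * I2 y)" unfolding I2_def phi_def
    by (rule integrable_real_mult_indicator) auto
  have J: "phi1 \<le> integral\<^sup>L lborel (\<lambda>y. phi y * I2 y)"
  proof -
    have "integral\<^sup>L lborel (\<lambda>y. phi1 * I2 y) = phi1" unfolding I2_def by simp
    moreover have "integral\<^sup>L lborel (\<lambda>y. phi1 * I2 y) \<le> integral\<^sup>L lborel (\<lambda>y. phi y * I2 y)"
    proof (rule integral_mono)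
      show "integrable lborel (\<lambda>y. phi1 * I2 y)" unfolding I2_def by simp
      show "integrable lborel (\<lambda>y. phi y * I2 y)" by (rule intphiI2)
      fix y :: real
      show "phi1 * I2 y \<le> phi y * I2 y"
      proof (cases "I2 y = 0")
        case True then show ?thesis by simp
      next
        case False
        then have y: "I2 y = 1" "1 \<le> y" "y \<le> 2" using I2_01[of y] by auto
        have "(y - mustar)\<^sup>2 \<le> (1 - mustar)\<^sup>2"
        proof -
          have "\<bar>y - mustar\<bar> \<le> \<bar>1 - mustar\<bar>" using y mu3 by (simp add: abs_if)
          then show ?thesis by (simp only: abs_le_square_iff)
        qed
        then have "phi 1 \<le> phi y" unfolding phi_def normal_density_def
          by (intro mult_left_mono) auto
        then show ?thesis using y phi1_def by simp
      qed
    qed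
    ultimately show ?thesis by linarith
  qed
  define C where "C = 1 + real M * exp 2"
  have C0: "0 \<le> C" unfolding C_def by simp
  have wx: "\<And>x. x < 0 \<Longrightarrow> w x \<le> C * K / phi1"
  proof -
    fix x :: real assume x: "x < 0"
    have "w x * phi1 \<le> w x * integral\<^sup>L lborel (\<lambda>y. phi y * I2 y)"
      using J w01[of x] by (intro mult_left_mono) auto
    also have "\<dots> = integral\<^sup>L lborel (\<lambda>y. w x * (phi y * I2 y))" by simp
    also have "\<dots> \<le> integral\<^sup>L lborel (\<lambda>y. C * (phi y * w y * I2 y))"
    proof (rule integral_mono)
      show "integrable lborel (\<lambda>y. w x * (phi y * I2 y))" using intphiI2 by simp
      show "integrable lborel (\<lambda>y. C * (phi y * w y * I2 y))" using intK by simp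
      fix y :: real
      show "w x * (phi y * I2 y) \<le> C * (phi y * w y * I2 y)"
      proof (cases "I2 y = 0")
        case True then show ?thesis by simp
      next
        case False
        then have y: "I2 y = 1" "1 \<le> y" "y \<le> 2" using I2_01[of y] by auto
        have "w x \<le> C * w y" unfolding w_def C_def
          using weight_compare[OF iM, of x y mu] x y assms(5) by simp
        then have "w x * phi y \<le> C * w y * phi y" using phi0[of y] by (intro mult_right_mono) auto
        then show ?thesis using y by (simp add: mult_ac)
      qed
    qed
    also have "\<dots> = C * K" unfolding K_def by simp
    finally have "w x * phi1 \<le> C * K" .
    then show "w x \<le> C * K / phi1" using phi1pos by (simp add: field_simps)
  qed
  have num: "C * exp (- mustar\<^sup>2 / 2) / 4 \<le> phi1"
    unfolding C_def phi1_def phi_def using num_bound[OF assms(1) assms(2) assms(3)] by simp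
  define c0 where "c0 = C * K / phi1 * (exp (- mustar\<^sup>2 / 2) / 4)"
  have c0K: "c0 \<le> K"
  proof -
    have "c0 = K * ((C * exp (- mustar\<^sup>2 / 2) / 4) / phi1)" unfolding c0_def by (simp add: field_simps)
    also have "\<dots> \<le> K * 1" using num phi1pos K0 by (intro mult_left_mono) auto
    finally show ?thesis by simp
  qed
  have A1b: "- c0 \<le> A1"
  proof -
    have "integral\<^sup>L lborel (\<lambda>x. - c0 * std_normal_density x) = - c0" by simp
    moreover have "integral\<^sup>L lborel (\<lambda>x. - c0 * std_normal_density x) \<le> A1"
      unfolding A1_def
    proof (rule integral_mono)
      show "integrable lborel (\<lambda>x. - c0 * std_normal_density x)" by simp
      show "integrable lborel (\<lambda>x. g x * I1 x)" by (rule int1)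
      fix x :: real
      have c00: "0 \<le> C * K / phi1" using C0 K0 phi1pos by simp
      show "- c0 * std_normal_density x \<le> g x * I1 x"
      proof (cases "x < 0")
        case False
        then have "I1 x = 0" using I1_01[of x] by auto
        moreover have "0 \<le> c0" unfolding c0_def using c00 by (intro mult_nonneg_nonneg) auto
        ultimately show ?thesis by (simp add: mult_nonneg_nonneg)
      next
        case True
        then have I: "I1 x = 1" using I1_01[of x] by auto
        have nt: "(- x) * phi x \<le> exp (- mustar\<^sup>2 / 2) / 4 * std_normal_density x"
          unfolding phi_def using neg_tail[OF True mu3] .
        have "w x * ((- x) * phi x) \<le> w x * (exp (- mustar\<^sup>2 / 2) / 4 * std_normal_density x)"
          using nt w01[of x] by (intro mult_left_mono) auto
        also have "\<dots> \<le> (C * K / phi1) * (exp (- mustar\<^sup>2 / 2) / 4 * std_normal_density x)"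
          using wx[OF True] by (intro mult_right_mono) auto
        finally have "w x * ((- x) * phi x) \<le> c0 * std_normal_density x"
          unfolding c0_def by (simp add: mult_ac)
        then show ?thesis using I unfolding g_def by (simp add: algebra_simps)
      qed
    qed
    ultimately show ?thesis by simp
  qed
  have A2b: "K \<le> A2" unfolding K_def A2_def
  proof (rule integral_mono[OF intK int2])
    fix y :: real
    show "phi y * w y * I2 y \<le> g y * I2 y"
    proof (cases "I2 y = 0")
      case True then show ?thesis by simp
    next
      case False
      then have y: "I2 y = 1" "1 \<le> y" "y \<le> 2" using I2_01[of y] by auto
      have "phi y * w y * 1 \<le> phi y * w y * y" using y phi0[of y] w01[of y]
        by (intro mult_left_mono) auto
      then show ?thesis using y unfolding g_def by (simp add: mult_ac)
    qed
  qed
  have main: "integral\<^sup>L lborel g \<ge> A3" using A3eq A1b A2b c0K by linarith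
  have A3pt: "\<And>x. g x - g x * I1 x - g x * I2 x = (if x < 0 \<or> (1 \<le> x \<and> x \<le> 2) then 0 else g x)"
    unfolding I1_def I2_def by (auto simp: indicator_def)
  have gpos: "0 \<le> g x" if "0 \<le> x" for x
    unfolding g_def using phi0[of x] w01[of x] that by (intro mult_nonneg_nonneg) auto
  have A3nn: "0 \<le> g x - g x * I1 x - g x * I2 x" for x
  proof (cases "x < 0 \<or> (1 \<le> x \<and> x \<le> 2)")
    case True then show ?thesis unfolding A3pt by simp
  next
    case False then have "0 \<le> x" by linarith
    with False show ?thesis unfolding A3pt using gpos[of x] by simp
  qed
  have A30: "0 \<le> A3" unfolding A3_def
    by (intro integral_nonneg_AE AE_I2) (rule A3nn)
  show ?thesis
  proof (intro conjI impI)
    show "0 \<le> (\<integral>x. weight M mu i x * x \<partial>(density lborel (normal_density mustar 1)))"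
      using E main A30 by linarith
  next
    assume h: "mustar \<le> 3 * a \<and> mu i \<le> 4 * a"
    define m where "m = (mu i + mustar) / 2"
    define L where "L = a / (5 * real M) * exp (- 9 * a\<^sup>2 / 2)"
    have m2: "2 < m + 1" unfolding m_def using assms(5) assms(3) a3 by (simp add: field_simps)
    have "integral\<^sup>L lborel (\<lambda>x. L * indicator {m+1..m+2} x) = L" by simp
    moreover have "integral\<^sup>L lborel (\<lambda>x. L * indicator {m+1..m+2} x) \<le> A3"
      unfolding A3_def
    proof (rule integral_mono[OF _ A3int])
      show "integrable lborel (\<lambda>x. L * indicator {m+1..m+2} x)" by simp
      fix x :: real
      show "L * indicator {m+1..m+2} x \<le> g x - g x * I1 x - g x * I2 x"
      proof (cases "x \<in> {m+1..m+2}")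
        case True
        then have x: "m + 1 \<le> x" "x \<le> m + 2" by auto
        have "L \<le> g x" unfolding L_def g_def phi_def w_def
          using L_bound[where mu=mu and i=i, OF iM a3 assms(3) conjunct1[OF h] assms(5) conjunct2[OF h], of x] x
          unfolding m_def by (simp add: mult_ac)
        moreover have "\<not> (x < 0 \<or> (1 \<le> x \<and> x \<le> 2))" using x m2 by linarith
        ultimately show ?thesis using True unfolding A3pt by auto
      next
        case False
        have "0 \<le> g x - g x * I1 x - g x * I2 x" by (rule A3nn)
        then show ?thesis using False by simp
      qed
    qed
    ultimately have "L \<le> A3" by simp
    then show "a / (5 * real M) * exp (- 9 * a\<^sup>2 / 2)
      \<le> (\<integral>x. weight M mu i x * x \<partial>(density lborel (normal_density mustar 1)))"
      using E main unfolding L_def by linarith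
  qed
qed

end
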